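(* Let $r$ and $k$ be positive integers with $k>r$, let $H$ be the complete graph of order $r+k$, and let $\mathbf{E}=(E_0,E_1,E_2)$ be an ordered partition of $E(H)$. Then (1) if $r<k\le\frac{3r-7}{2}$ and $|E_1|+2|E_2|<\min\left\{\frac12(k+3r-4)(k-r+3),\ (k-r+2)(k+r-1)\right\}$, then $H$ has a good matching for $\mathbf{E}$ of order $r$; and (2) if $k>\frac{3r-7}{2}$ and $|E_1|+2|E_2|<\min\left\{\frac12(k+1)(k+2),\ (k-r+2)(k+r-1)\right\}$, then $H$ has a good matching for $\mathbf{E}$ of order $r$.
   Context: An ordered partition $(E_0,E_1,E_2)$ of a set is a triple of pairwise disjoint (possibly empty) sets with that union. A matching $M$ is a good matching for $\mathbf{E}$ if $M\cap E_2=\emptyset$ and $|M\cap E_1|\le1$; the order of a matching is its number of edges. *)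

theory Defs
  imports Complex_Main
begin

definition complete_edges :: "'a set \<Rightarrow> 'a set set" where
  "complete_edges V = {e. e \<subseteq> V \<and> card e = 2}"

definition matching :: "'a set set \<Rightarrow> bool" where
  "matching M \<longleftrightarrow> (\<forall>e\<in>M. \<forall>f\<in>M. e \<noteq> f \<longrightarrow> e \<inter> f = {})"

definition ordered_partition3 :: "'b set \<Rightarrow> 'b set \<Rightarrow> 'b set \<Rightarrow> 'b set \<Rightarrow> bool" where
  "ordered_partition3 S E0 E1 E2 \<longleftrightarrow>
     E0 \<inter> E1 = {} \<and> E0 \<inter> E2 = {} \<and> E1 \<inter> E2 = {} \<and> E0 \<union> E1 \<union> E2 = S"

definition good_matching :: "'a set set \<Rightarrow> 'a set set \<Rightarrow> 'a set set \<Rightarrow> 'a set set \<Rightarrow> bool" where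
  "good_matching EH E1 E2 M \<longleftrightarrow>
     M \<subseteq> EH \<and> matching M \<and> M \<inter> E2 = {} \<and> card (M \<inter> E1) \<le> 1"

end

theory Submission
  imports Defs
begin


definition pairs :: "nat \<Rightarrow> nat set set" where
  "pairs n = {{a,b} | a b. a < n \<and> b < n \<and> a \<noteq> b}"

definition nmatch :: "nat \<Rightarrow> nat \<Rightarrow> nat set set \<Rightarrow> bool" where
  "nmatch n r M \<longleftrightarrow> finite M \<and> M \<subseteq> pairs n \<and> (\<forall>e\<in>M. \<forall>f\<in>M. e \<noteq> f \<longrightarrow> e \<inter> f = {}) \<and> card M = r"

definition bad :: "nat \<Rightarrow> nat \<Rightarrow> (nat set \<Rightarrow> nat) \<Rightarrow> bool" where
  "bad n r c \<longleftrightarrow> (\<forall>M. nmatch n r M \<longrightarrow> 2 \<le> (\<Sum>e\<in>M. c e))"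

definition stable :: "nat \<Rightarrow> (nat set \<Rightarrow> nat) \<Rightarrow> bool" where
  "stable n c \<longleftrightarrow> (\<forall>x i j. x < n \<longrightarrow> j < n \<longrightarrow> i < j \<longrightarrow> x \<noteq> i \<longrightarrow> x \<noteq> j \<longrightarrow> c {x,i} \<le> c {x,j})"

definition Wt :: "nat \<Rightarrow> (nat set \<Rightarrow> nat) \<Rightarrow> nat" where
  "Wt n c = (\<Sum>b<n. \<Sum>a<b. c {a,b})"

definition Lstab :: "nat \<Rightarrow> nat \<Rightarrow> int" where
  "Lstab r n = (let k = int n - int r; r' = int r in
     (if r = 1 then 2 * int n * (int n - 1)
      else min ((k + 3*r' - 4) * (k - r' + 3)) (min ((k+1)*(k+2)) (2*(k - r' + 2)*(k + r' - 1)))))"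

lemma stableD:
  assumes "stable n c" "x < n" "j < n" "i < j" "x \<noteq> i" "x \<noteq> j"
  shows "c {x,i} \<le> c {x,j}"
  using assms unfolding stable_def by blast

lemma mono2:
  assumes st: "stable n c" and ab: "a < b" "b < n" and le: "a0 \<le> a" "b0 \<le> b" "a0 < b0"
  shows "c {a0,b0} \<le> c {a,b}"
proof -
  have 1: "c {a0,b0} \<le> c {a0,b}"
  proof (cases "b0 < b")
    case True thus ?thesis using stableD[OF st, of a0 b b0] ab le by simp
  next
    case False thus ?thesis using le by simp
  qed
  have 2: "c {a0,b} \<le> c {a,b}"
  proof (cases "a0 < a")
    case True
    have "c {b,a0} \<le> c {b,a}" using stableD[OF st, of b a a0] ab le True by simp
    thus ?thesis by (simp add: insert_commute)
  next
    case False thus ?thesis using le by simp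
  qed
  show ?thesis using 1 2 by simp
qed

lemma sumlin:
  assumes "m \<le> n"
  shows "2 * (\<Sum>b\<in>{m..<n}. (int b - s)) = (int n - int m) * (int n + int m - 1 - 2*s)"
  using assms
proof (induction n rule: dec_induct)
  case base thus ?case by simp
next
  case (step n)
  have "{m..<Suc n} = insert n {m..<n}" using step by auto
  hence "(\<Sum>b\<in>{m..<Suc n}. (int b - s)) = (int n - s) + (\<Sum>b\<in>{m..<n}. (int b - s))" by simp
  hence "2 * (\<Sum>b\<in>{m..<Suc n}. (int b - s)) = 2*(int n - s) + (int n - int m) * (int n + int m - 1 - 2*s)"
    using step.IH by simp
  also have "\<dots> = (int (Suc n) - int m) * (int (Suc n) + int m - 1 - 2*s)"
    by (simp add: algebra_simps)
  finally show ?case .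
qed

lemma count_ge:
  "(\<Sum>a<b. if lo \<le> a then (1::nat) else 0) = b - lo"
  by (induction b) (auto simp: Suc_diff_le)



lemma arithA:
  fixes n r s :: int
  assumes "0 \<le> s" "s \<le> r - 2" "2*r+1 \<le> n"
  shows "min ((n+2*r-4)*(n-2*r+3)) ((n-r+1)*(n-r+2)) \<le> (n - 2*r + 3 + s)*(n + 2*r - 4 - 3*s)"
proof -
  define R where "R = r - 2"
  define m where "m = min ((n+2*r-4)*(n-2*r+3)) ((n-r+1)*(n-r+2))"
  define g where "g = (\<lambda>t. (n - 2*r + 3 + t)*(n + 2*r - 4 - 3*t))"
  have g0: "g 0 = (n+2*r-4)*(n-2*r+3)" unfolding g_def by (simp add: algebra_simps)
  have gR: "g R = (n-r+1)*(n-r+2)" unfolding g_def R_def by (simp add: algebra_simps)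
  have id: "R * g s = (R - s) * g 0 + s * g R + 3*s*(R-s)*R" unfolding g_def by (simp add: algebra_simps)
  have m0: "m \<le> g 0" "m \<le> g R" unfolding m_def g0 gR by auto
  have "(R - s) * m \<le> (R - s) * g 0" using assms m0 unfolding R_def
    by (intro mult_left_mono) auto
  moreover have "s * m \<le> s * g R" using assms m0
    by (intro mult_left_mono) auto
  moreover have "0 \<le> 3*s*(R-s)*R" using assms R_def by simp
  ultimately have "R * m \<le> R * g s" using id by (simp add: algebra_simps)
  show ?thesis
  proof (cases "R = 0")
    case True
    hence "s = 0" using assms R_def by simp
    thus ?thesis using g0 unfolding m_def g_def by (simp add: mult.commute)
  next
    case False
    hence "R > 0" using assms R_def by simp
    hence "m \<le> g s" using \<open>R * m \<le> R * g s\<close> by (simp add: mult_le_cancel_left)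
    thus ?thesis unfolding m_def g_def .
  qed
qed

lemma Lstab_le_min12:
  assumes "2 \<le> r"
  shows "Lstab r n \<le> min ((int n+2*int r-4)*(int n-2*int r+3)) ((int n-int r+1)*(int n-int r+2))"
  using assms unfolding Lstab_def Let_def by (simp add: algebra_simps min_def)

lemma Lstab_le_3:
  assumes "2 \<le> r"
  shows "Lstab r n \<le> 2*(int n - 2*int r + 2)*(int n - 1)"
  using assms unfolding Lstab_def Let_def by (simp add: algebra_simps min_def)

lemma caseA:
  assumes st: "stable n c" and r2: "2 \<le> r" and rn: "2*r < n" and s: "s \<le> r - 2"
    and c1: "1 \<le> c {s, 2*r-3-s}"
  shows "Lstab r n \<le> 2 * int (Wt n c)"
proof -
  define cc where "cc = 2*r-3-s"
  have scc: "s < cc" "cc \<le> n" using s r2 rn unfolding cc_def by auto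
  have row: "b - s \<le> (\<Sum>a<b. c {a,b})" if b: "cc \<le> b" "b < n" for b
  proof -
    have "(\<Sum>a<b. if s \<le> a then (1::nat) else 0) \<le> (\<Sum>a<b. c {a,b})"
    proof (rule sum_mono)
      fix a assume "a \<in> {..<b}"
      hence "a < b" by simp
      show "(if s \<le> a then 1 else 0) \<le> c {a, b}"
      proof (cases "s \<le> a")
        case True
        have "c {s,cc} \<le> c {a,b}" by (rule mono2[OF st \<open>a<b\<close> b(2) True b(1) scc(1)])
        thus ?thesis using True c1 cc_def by simp
      qed simp
    qed
    thus ?thesis by (simp add: count_ge)
  qed
  have "(\<Sum>b\<in>{cc..<n}. b - s) \<le> (\<Sum>b\<in>{cc..<n}. (\<Sum>a<b. c {a,b}))"
    by (rule sum_mono) (use row in auto)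
  also have "\<dots> \<le> (\<Sum>b<n. (\<Sum>a<b. c {a,b}))"
    by (rule sum_mono2) auto
  finally have W: "(\<Sum>b\<in>{cc..<n}. b - s) \<le> Wt n c" unfolding Wt_def .
  have "(\<Sum>b\<in>{cc..<n}. int (b - s)) = (\<Sum>b\<in>{cc..<n}. (int b - int s))"
    by (rule sum.cong) (use scc in auto)
  hence "int (\<Sum>b\<in>{cc..<n}. b - s) = (\<Sum>b\<in>{cc..<n}. (int b - int s))" by simp
  hence "2 * int (Wt n c) \<ge> (int n - int cc) * (int n + int cc - 1 - 2 * int s)"
    using sumlin[OF scc(2), of "int s"] W by linarith
  moreover have "int cc = 2 * int r - 3 - int s" using scc cc_def r2 s by auto
  ultimately have "2 * int (Wt n c) \<ge> (int n - 2*int r + 3 + int s)*(int n + 2*int r - 4 - 3*int s)"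
    by (simp add: algebra_simps)
  moreover have "min ((int n+2*int r-4)*(int n-2*int r+3)) ((int n-int r+1)*(int n-int r+2)) \<le> (int n - 2*int r + 3 + int s)*(int n + 2*int r - 4 - 3*int s)"
    by (rule arithA) (use s r2 rn in auto)
  ultimately show ?thesis using Lstab_le_min12[OF r2, of n] by linarith
qed



lemma pairsI: "a < n \<Longrightarrow> b < n \<Longrightarrow> a \<noteq> b \<Longrightarrow> {a,b} \<in> pairs n"
  unfolding pairs_def by blast

lemma pairs_ne: "e \<in> pairs n \<Longrightarrow> e \<noteq> {}"
  unfolding pairs_def by blast

lemma nmatch_insert:
  assumes "nmatch n r M" "e \<in> pairs n" "\<forall>f\<in>M. e \<inter> f = {}"
  shows "nmatch n (Suc r) (insert e M)"
proof -
  have "e \<notin> M" using assms pairs_ne by fastforce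
  thus ?thesis using assms unfolding nmatch_def by (auto simp: Int_commute)
qed

lemma disjI2: "\<forall>f\<in>M. a \<notin> f \<and> b \<notin> f \<Longrightarrow> \<forall>f\<in>M. {a,b} \<inter> f = {}"
  by auto

lemma nmatch_disj: "nmatch n r M \<Longrightarrow> e \<in> M \<Longrightarrow> f \<in> M \<Longrightarrow> e \<noteq> f \<Longrightarrow> e \<inter> f = {}"
  unfolding nmatch_def by blast

lemma nmatch_remove:
  assumes "nmatch n r M" "e \<in> M"
  shows "nmatch n (r - 1) (M - {e})"
  using assms unfolding nmatch_def by (auto simp: card_Diff_singleton)

definition nest :: "nat \<Rightarrow> nat set set" where
  "nest r = (\<lambda>i. {i, 2*r-3-i}) ` {..<r-1}"

lemma nest_mem: "e \<in> nest r \<longleftrightarrow> (\<exists>i<r-1. e = {i, 2*r-3-i})"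
  unfolding nest_def by auto

lemma nest_sub: "2 \<le> r \<Longrightarrow> e \<in> nest r \<Longrightarrow> e \<subseteq> {..<2*r-2}"
  unfolding nest_mem by auto

lemma nest_match:
  assumes "2 \<le> r" "2*r < n"
  shows "nmatch n (r-1) (nest r)"
proof -
  have inj: "inj_on (\<lambda>i. {i, 2*r-3-i}) {..<r-1}"
  proof (rule inj_onI)
    fix i j assume ij: "i \<in> {..<r-1}" "j \<in> {..<r-1}" "{i, 2*r-3-i} = {j, 2*r-3-j}"
    hence "i \<in> {j, 2*r-3-j}" by blast
    thus "i = j" using ij by auto
  qed
  have "card (nest r) = r - 1" unfolding nest_def using card_image[OF inj] by simp
  moreover have "nest r \<subseteq> pairs n" unfolding nest_def using assms by (auto intro!: pairsI)
  moreover have "\<forall>e\<in>nest r. \<forall>f\<in>nest r. e \<noteq> f \<longrightarrow> e \<inter> f = {}"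
  proof (intro ballI impI)
    fix e f assume "e \<in> nest r" "f \<in> nest r" "e \<noteq> f"
    then obtain i j where "i < r-1" "j < r-1" "e = {i, 2*r-3-i}" "f = {j, 2*r-3-j}"
      unfolding nest_mem by blast
    moreover have "i \<noteq> j" using calculation \<open>e \<noteq> f\<close> by blast
    ultimately show "e \<inter> f = {}" using assms by auto
  qed
  ultimately show ?thesis unfolding nmatch_def nest_def by auto
qed

lemma nest_other:
  assumes "2 \<le> r" "p < 2*r-2"
  shows "{p, 2*r-3-p} \<in> nest r"
proof (cases "p < r - 1")
  case True thus ?thesis unfolding nest_mem by auto
next
  case False
  hence "2*r-3-p < r-1" "2*r-3-(2*r-3-p) = p" using assms by auto
  thus ?thesis unfolding nest_mem by (metis insert_commute)
qed

lemma caseC: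
  assumes st: "stable n c" and bd: "bad n r c" and r2: "2 \<le> r" and rn: "2*r < n"
    and hz: "\<forall>i<r-1. c {i, 2*r-3-i} = 0" and c1: "1 \<le> c {0, 2*r-1}"
  shows "Lstab r n \<le> 2 * int (Wt n c)"
proof -
  let ?N = "nest r"
  have NM: "nmatch n (r-1) ?N" by (rule nest_match[OF r2 rn])
  have Nz: "\<forall>e\<in>?N. c e = 0"
  proof
    fix e assume "e \<in> ?N"
    then obtain i where "i < r-1" "e = {i, 2*r-3-i}" unfolding nest_mem by blast
    thus "c e = 0" using hz by simp
  qed
  have Nsub: "\<forall>e\<in>?N. e \<subseteq> {..<2*r-2}" using nest_sub[OF r2] by blast
  have Nout: "\<forall>e\<in>?N. \<forall>x\<in>e. x < 2*r-2"
  proof (intro ballI)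
    fix e x assume "e \<in> ?N" "x \<in> e"
    thus "x < 2*r-2" using Nsub by blast
  qed
  have Nout2: "\<forall>f\<in>?N. 2*r-2 \<notin> f \<and> 2*r-1 \<notin> f"
  proof
    fix f assume "f \<in> ?N"
    hence "\<forall>x\<in>f. x < 2*r-2" using Nout by blast
    moreover have "\<not> (2*r-2 < 2*r-2)" "\<not> (2*r-1 < 2*r-2)" by simp_all
    ultimately show "2*r-2 \<notin> f \<and> 2*r-1 \<notin> f" by blast
  qed
  have fin: "finite ?N" using NM unfolding nmatch_def by simp
  have sumN: "(\<Sum>e\<in>?N. c e) = 0" using Nz by simp
  have top2: "2 \<le> c {2*r-2, 2*r-1}"
  proof -
    have "nmatch n (Suc (r-1)) (insert {2*r-2, 2*r-1} ?N)"
    proof (rule nmatch_insert[OF NM], rule pairsI)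
      show "\<forall>f\<in>?N. {2*r-2, 2*r-1} \<inter> f = {}" by (rule disjI2) (use Nout2 in blast)
    qed (use rn r2 in simp_all)
    moreover have "Suc (r-1) = r" using r2 by simp
    ultimately have "2 \<le> (\<Sum>e\<in>insert {2*r-2, 2*r-1} ?N. c e)" using bd unfolding bad_def by metis
    moreover have "{2*r-2, 2*r-1} \<notin> ?N" using Nout2 by blast
    ultimately show ?thesis using fin sumN by simp
  qed
  have pair2: "2 \<le> c {p, 2*r-2} + c {2*r-3-p, 2*r-1}" if p: "p < 2*r-2" for p
  proof (cases "c {p, 2*r-2} = 0")
    case False
    have "c {0, 2*r-1} \<le> c {2*r-3-p, 2*r-1}"
      by (rule mono2[OF st]) (use r2 rn p in auto)
    thus ?thesis using False c1 by linarith
  next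
    case True
    define q where "q = 2*r-3-p"
    have pq1: "p \<noteq> q"
    proof
      assume "p = q"
      hence "p + p = 2*r-3" using p unfolding q_def by simp
      thus False using r2 by presburger
    qed
    have pq: "p \<noteq> q" "q < 2*r-2" using pq1 p r2 unfolding q_def by auto
    have e0: "{p,q} \<in> ?N" unfolding q_def by (rule nest_other[OF r2 p])
    have M0: "nmatch n (r-1-1) (?N - {{p,q}})" by (rule nmatch_remove[OF NM e0])
    have dis: "\<forall>f\<in>?N - {{p,q}}. {p,q} \<inter> f = {}" using nmatch_disj[OF NM e0] by blast
    have M1: "nmatch n (Suc (r-1-1)) (insert {q, 2*r-1} (?N - {{p,q}}))"
    proof (rule nmatch_insert[OF M0], rule pairsI)
      show "\<forall>f\<in>?N - {{p, q}}. {q, 2 * r - 1} \<inter> f = {}"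
        by (rule disjI2) (use Nout2 dis in blast)
    qed (use rn pq in simp_all)
    have M2: "nmatch n (Suc (Suc (r-1-1))) (insert {p, 2*r-2} (insert {q, 2*r-1} (?N - {{p,q}})))"
    proof (rule nmatch_insert[OF M1], rule pairsI)
      have "\<forall>f\<in>?N - {{p, q}}. p \<notin> f \<and> 2*r-2 \<notin> f" using Nout2 dis by blast
      moreover have "p \<notin> {q, 2*r-1}" "2*r-2 \<notin> {q, 2*r-1}" using pq p by auto
      ultimately show "\<forall>f\<in>insert {q, 2*r-1} (?N - {{p, q}}). {p, 2*r-2} \<inter> f = {}"
        by (intro disjI2) blast
    qed (use rn p in simp_all)
    have "Suc (Suc (r-1-1)) = r" using r2 by simp
    hence "2 \<le> (\<Sum>e\<in>insert {p, 2*r-2} (insert {q, 2*r-1} (?N - {{p,q}})). c e)"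
      using bd M2 unfolding bad_def by metis
    moreover have "{q, 2*r-1} \<notin> ?N - {{p,q}}" using Nout2 by blast
    moreover have "{p, 2*r-2} \<notin> insert {q, 2*r-1} (?N - {{p,q}})" using Nsub r2 pq by auto
    moreover have "(\<Sum>e\<in>?N - {{p,q}}. c e) = 0" using Nz by simp
    ultimately have "2 \<le> c {p, 2*r-2} + c {q, 2*r-1}" using fin by simp
    thus ?thesis unfolding q_def .
  qed
  define row where "row b = (\<Sum>a<b. c {a,b})" for b
  have Wt_row: "Wt n c = (\<Sum>b<n. row b)" unfolding Wt_def row_def ..
  have r1: "row (2*r-1) = (\<Sum>a<2*r-2. c {a, 2*r-1}) + c {2*r-2, 2*r-1}"
  proof -
    have "2*r-1 = Suc (2*r-2)" using r2 by simp
    thus ?thesis unfolding row_def by simp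
  qed
  have rev: "(\<Sum>a<2*r-2. c {a, 2*r-1}) = (\<Sum>p<2*r-2. c {2*r-3-p, 2*r-1})"
  proof -
    have "(\<Sum>p<2*r-2. c {(2*r-2) - Suc p, 2*r-1}) = (\<Sum>a<2*r-2. c {a, 2*r-1})"
      by (rule sum.nat_diff_reindex)
    moreover have "\<And>p. (2*r-2) - Suc p = 2*r-3-p" by simp
    ultimately show ?thesis by simp
  qed
  have "(\<Sum>p<2*r-2. (2::nat)) \<le> (\<Sum>p<2*r-2. c {p, 2*r-2} + c {2*r-3-p, 2*r-1})"
    by (rule sum_mono) (use pair2 in auto)
  hence "2*(2*r-2) \<le> row (2*r-2) + (\<Sum>a<2*r-2. c {a, 2*r-1})"
    unfolding rev row_def by (simp add: sum.distrib)
  hence low2: "4*r - 2 \<le> row (2*r-2) + row (2*r-1)" using r1 top2 r2 by linarith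
  have "row (2*r-2) + row (2*r-1) = (\<Sum>b\<in>{2*r-2, 2*r-1}. row b)" using r2 by simp
  also have "\<dots> \<le> (\<Sum>b<2*r. row b)" by (rule sum_mono2) (use r2 in auto)
  finally have lowA: "4*r - 2 \<le> (\<Sum>b<2*r. row b)" using low2 by linarith
  have rowb: "b + (b - (2*r-2)) \<le> row b" if b: "2*r \<le> b" "b < n" for b
  proof -
    have "(\<Sum>a<b. 1 + (if 2*r-2 \<le> a then (1::nat) else 0)) \<le> row b"
      unfolding row_def
    proof (rule sum_mono)
      fix a assume "a \<in> {..<b}"
      hence ab: "a < b" by simp
      show "1 + (if 2*r-2 \<le> a then (1::nat) else 0) \<le> c {a, b}"
      proof (cases "2*r-2 \<le> a")
        case True
        have "c {2*r-2, 2*r-1} \<le> c {a,b}" by (rule mono2[OF st ab b(2) True]) (use b r2 in auto)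
        thus ?thesis using top2 True by simp
      next
        case False
        have "c {0, 2*r-1} \<le> c {a,b}" by (rule mono2[OF st ab b(2)]) (use b r2 in auto)
        thus ?thesis using c1 False by simp
      qed
    qed
    moreover have "(\<Sum>a<b. 1 + (if 2*r-2 \<le> a then (1::nat) else 0)) = b + (b - (2*r-2))"
      unfolding sum.distrib count_ge by simp
    ultimately show ?thesis by simp
  qed
  have A: "(\<Sum>b\<in>{2*r..<n}. b + (b - (2*r-2))) \<le> (\<Sum>b\<in>{2*r..<n}. row b)"
    by (rule sum_mono) (use rowb in auto)
  have B: "int (\<Sum>b\<in>{2*r..<n}. b + (b - (2*r-2))) = 2 * (\<Sum>b\<in>{2*r..<n}. (int b - (int r - 1)))"
  proof -
    have "(\<Sum>b\<in>{2*r..<n}. int (b + (b - (2*r-2)))) = (\<Sum>b\<in>{2*r..<n}. 2 * (int b - (int r - 1)))"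
      by (rule sum.cong) (use r2 in auto)
    thus ?thesis by (simp add: sum_distrib_left)
  qed
  have C: "2 * (\<Sum>b\<in>{2*r..<n}. (int b - (int r - 1))) = (int n - int (2*r)) * (int n + int (2*r) - 1 - 2*(int r - 1))"
    by (rule sumlin) (use rn in auto)
  have D: "(int n - int (2*r)) * (int n + int (2*r) - 1 - 2*(int r - 1)) = (int n - 2*int r) * (int n + 1)"
    by (simp add: algebra_simps)
  have E: "int (\<Sum>b\<in>{2*r..<n}. b + (b - (2*r-2))) \<le> int (\<Sum>b\<in>{2*r..<n}. row b)"
    using A by (simp only: of_nat_le_iff)
  have lowB: "(int n - 2*int r) * (int n + 1) \<le> int (\<Sum>b\<in>{2*r..<n}. row b)"
    using B C D E by linarith
  have "(\<Sum>b<n. row b) = (\<Sum>b<2*r. row b) + (\<Sum>b\<in>{2*r..<n}. row b)"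
  proof -
    have "{..<n} = {..<2*r} \<union> {2*r..<n}" using rn by auto
    thus ?thesis by (metis sum.union_disjoint finite_lessThan finite_atLeastLessThan ivl_disj_int_one(2))
  qed
  hence "int (Wt n c) \<ge> 4*int r - 2 + (int n - 2*int r) * (int n + 1)"
    using lowA lowB Wt_row r2 by linarith
  hence "2 * int (Wt n c) \<ge> 2*(int n - 2*int r + 2)*(int n - 1)"
    by (simp add: algebra_simps)
  thus ?thesis using Lstab_le_3[OF r2, of n] by linarith
qed



lemma le_by_diff: "(x::int) - y = d \<Longrightarrow> 0 \<le> d \<Longrightarrow> y \<le> x"
  by simp

lemma Lstab_mono:
  assumes r2: "2 \<le> r" and rn: "2*r < n"
  shows "Lstab r n \<le> Lstab (r-1) (n-1)"
proof -
  define K where "K = int n - int r"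
  define R where "R = int r"
  have KR: "K \<ge> R + 1" "R \<ge> 2" using r2 rn unfolding K_def R_def by auto
  have L: "Lstab r n = min ((K + 3*R - 4) * (K - R + 3)) (min ((K+1)*(K+2)) (2*(K - R + 2)*(K + R - 1)))"
    using r2 unfolding Lstab_def Let_def K_def R_def by simp
  have P3: "2*(K - R + 2)*(K + R - 1) \<le> 2*(K - R + 3)*(K + R - 2)"
  proof -
    have "2*(K - R + 3)*(K + R - 2) - 2*(K - R + 2)*(K + R - 1) = 2*(2*R - 4)"
      by (simp add: algebra_simps)
    thus ?thesis by (rule le_by_diff) (use KR in simp)
  qed
  show ?thesis
  proof (cases "r = 2")
    case True
    have "Lstab (r-1) (n-1) = 2 * (K+1) * K"
      using True rn unfolding Lstab_def K_def by (simp add: of_nat_diff algebra_simps)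
    moreover have "2*(K - R + 2)*(K + R - 1) = 2 * (K+1) * K" using True R_def by (simp add: algebra_simps)
    ultimately show ?thesis using L by linarith
  next
    case False
    hence r3: "r - 1 \<noteq> 1" using r2 by simp
    have "int (n-1) - int (r-1) = K" "int (r-1) = R - 1" using r2 rn unfolding K_def R_def by auto
    hence L2: "Lstab (r-1) (n-1) = min ((K + 3*(R-1) - 4) * (K - (R-1) + 3)) (min ((K+1)*(K+2)) (2*(K - (R-1) + 2)*(K + (R-1) - 1)))"
      using r3 unfolding Lstab_def Let_def by simp
    have R3: "R \<ge> 3" using False r2 R_def by simp
    have P1: "min ((K + 3*R - 4) * (K - R + 3)) ((K+1)*(K+2)) \<le> (K + 3*(R-1) - 4) * (K - (R-1) + 3)"
    proof (cases "K \<le> 3*R - 8")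
      case True
      have "(K + 3*(R-1) - 4) * (K - (R-1) + 3) - (K + 3*R - 4) * (K - R + 3) = 2*(3*R - K - 8)"
        by (simp add: algebra_simps)
      hence "(K + 3*R - 4) * (K - R + 3) \<le> (K + 3*(R-1) - 4) * (K - (R-1) + 3)"
        by (rule le_by_diff) (use True in simp)
      thus ?thesis by linarith
    next
      case False
      have "(K + 3*(R-1) - 4) * (K - (R-1) + 3) - (K+1)*(K+2) = (R - 3)*(2*K - 3*R + 10)"
        by (simp add: algebra_simps)
      moreover have "0 \<le> (R - 3)*(2*K - 3*R + 10)" using False R3 by simp
      ultimately have "(K+1)*(K+2) \<le> (K + 3*(R-1) - 4) * (K - (R-1) + 3)"
        by (rule le_by_diff)
      thus ?thesis by linarith
    qed
    have "2*(K - (R-1) + 2)*(K + (R-1) - 1) = 2*(K - R + 3)*(K + R - 2)" by (simp add: algebra_simps)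
    thus ?thesis using L L2 P1 P3 by linarith
  qed
qed



lemma base1:
  assumes bd: "bad n 1 c"
  shows "Lstab 1 n \<le> 2 * int (Wt n c)"
proof -
  have c2: "2 \<le> c {a,b}" if "a < b" "b < n" for a b
  proof -
    have "nmatch n 1 {{a,b}}" unfolding nmatch_def using that by (auto intro!: pairsI)
    thus ?thesis using bd unfolding bad_def by fastforce
  qed
  have "(\<Sum>b<n. \<Sum>a<b. (2::nat)) \<le> Wt n c" unfolding Wt_def
    by (intro sum_mono) (use c2 in auto)
  hence "(\<Sum>b<n. 2 * b) \<le> Wt n c" by (simp add: mult.commute)
  hence "int (\<Sum>b<n. 2 * b) \<le> int (Wt n c)" by (simp only: of_nat_le_iff)
  moreover have "int (\<Sum>b<n. 2 * b) = 2 * (\<Sum>b\<in>{0..<n}. (int b - 0))"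
    by (simp add: sum_distrib_left atLeast0LessThan)
  moreover have "2 * (\<Sum>b\<in>{0..<n}. (int b - 0)) = (int n - int 0) * (int n + int 0 - 1 - 2*0)"
    by (rule sumlin) simp
  ultimately have "int n * (int n - 1) \<le> int (Wt n c)" by simp
  thus ?thesis unfolding Lstab_def by simp
qed

lemma Wt_shift:
  "Wt m (\<lambda>e. c (Suc ` e)) \<le> Wt (Suc m) c"
proof -
  have "Wt (Suc m) c = (\<Sum>a<0. c {a, 0}) + (\<Sum>b<m. \<Sum>a<Suc b. c {a, Suc b})"
    unfolding Wt_def by (rule sum.lessThan_Suc_shift)
  also have "\<dots> = (\<Sum>b<m. \<Sum>a<Suc b. c {a, Suc b})" by simp
  also have "\<dots> = (\<Sum>b<m. c {0, Suc b} + (\<Sum>a<b. c {Suc a, Suc b}))"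
    by (rule sum.cong[OF refl], rule sum.lessThan_Suc_shift)
  finally have 1: "Wt (Suc m) c = (\<Sum>b<m. c {0, Suc b} + (\<Sum>a<b. c {Suc a, Suc b}))" .
  have 2: "Wt m (\<lambda>e. c (Suc ` e)) = (\<Sum>b<m. \<Sum>a<b. c {Suc a, Suc b})"
    unfolding Wt_def by simp
  show ?thesis unfolding 1 2 by (intro sum_mono) simp
qed

lemma image_Suc_pairs: "e \<in> pairs m \<Longrightarrow> Suc ` e \<in> pairs (Suc m)"
  unfolding pairs_def by auto

lemma pairs_card: "e \<in> pairs n \<Longrightarrow> card e = 2"
  unfolding pairs_def by auto

lemma caseB:
  assumes st: "stable n c" and bd: "bad n r c" and r2: "2 \<le> r" and rn: "2*r < n"
    and c0: "c {0, 2*r-1} = 0"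
  shows "stable (n-1) (\<lambda>e. c (Suc ` e))" "bad (n-1) (r-1) (\<lambda>e. c (Suc ` e))"
proof -
  show "stable (n-1) (\<lambda>e. c (Suc ` e))"
    unfolding stable_def
  proof (intro allI impI)
    fix x i j assume h: "x < n-1" "j < n-1" "i < j" "x \<noteq> i" "x \<noteq> j"
    have "c {Suc x, Suc i} \<le> c {Suc x, Suc j}" by (rule stableD[OF st]) (use h in auto)
    thus "c (Suc ` {x, i}) \<le> c (Suc ` {x, j})" by simp
  qed
  show "bad (n-1) (r-1) (\<lambda>e. c (Suc ` e))"
    unfolding bad_def
  proof (intro allI impI)
    fix M' assume M': "nmatch (n-1) (r-1) M'"
    show "2 \<le> (\<Sum>e\<in>M'. c (Suc ` e))"
    proof (rule ccontr)
      assume "\<not> 2 \<le> (\<Sum>e\<in>M'. c (Suc ` e))"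
      hence lt: "(\<Sum>e\<in>M'. c (Suc ` e)) \<le> 1" by simp
      define M where "M = (\<lambda>e. Suc ` e) ` M'"
      have injM: "inj_on (\<lambda>e. Suc ` e) M'" by (meson inj_Suc inj_image_eq_iff inj_onI)
      have sumM: "(\<Sum>e\<in>M. c e) = (\<Sum>e\<in>M'. c (Suc ` e))"
        unfolding M_def by (simp add: sum.reindex[OF injM])
      have n1: "Suc (n-1) = n" using rn by simp
      have MM: "nmatch n (r-1) M"
        unfolding nmatch_def
      proof (intro conjI)
        show "finite M" using M' unfolding M_def nmatch_def by simp
        show "M \<subseteq> pairs n" using M' image_Suc_pairs[of _ "n-1"] n1 unfolding M_def nmatch_def by auto
        show "\<forall>e\<in>M. \<forall>f\<in>M. e \<noteq> f \<longrightarrow> e \<inter> f = {}"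
        proof (intro ballI impI)
          fix e f assume "e \<in> M" "f \<in> M" "e \<noteq> f"
          then obtain e' f' where ef: "e' \<in> M'" "f' \<in> M'" "e = Suc ` e'" "f = Suc ` f'"
            unfolding M_def by blast
          hence "e' \<noteq> f'" using \<open>e \<noteq> f\<close> by blast
          hence "e' \<inter> f' = {}" using nmatch_disj[OF M'] ef by blast
          thus "e \<inter> f = {}" using ef by (auto simp: image_Int[symmetric])
        qed
        show "card M = r - 1" using M' card_image[OF injM] unfolding M_def nmatch_def by simp
      qed
      have no0: "\<forall>f\<in>M. 0 \<notin> f" unfolding M_def by auto
      have "card (\<Union>M) \<le> sum card M" by (rule card_Union_le_sum_card)
      also have "sum card M = (\<Sum>e\<in>M. 2)"
        by (rule sum.cong) (use MM pairs_card in \<open>auto simp: nmatch_def\<close>)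
      also have "\<dots> = 2*(r-1)" using MM unfolding nmatch_def by simp
      finally have cu: "card (\<Union>M) \<le> 2*(r-1)" .
      have "\<not> {1..2*r-1} \<subseteq> \<Union>M"
      proof
        assume "{1..2*r-1} \<subseteq> \<Union>M"
        moreover have "finite (\<Union>M)" using MM pairs_card unfolding nmatch_def
          by (metis card_eq_0_iff finite_Union subset_iff zero_neq_numeral)
        ultimately have "card {1..2*r-1} \<le> card (\<Union>M)" by (rule card_mono[rotated])
        thus False using cu r2 by simp
      qed
      then obtain x where "x \<in> {1..2*r-1}" "x \<notin> \<Union>M" by blast
      hence x: "1 \<le> x" "x \<le> 2*r-1" "x \<notin> \<Union>M" by auto
      have cx: "c {0,x} = 0"
      proof (cases "x < 2*r-1")
        case True
        have "c {0,x} \<le> c {0, 2*r-1}" by (rule stableD[OF st]) (use True x rn in auto)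
        thus ?thesis using c0 by simp
      next
        case False thus ?thesis using x c0 by simp
      qed
      have M2: "nmatch n (Suc (r-1)) (insert {0,x} M)"
      proof (rule nmatch_insert[OF MM], rule pairsI)
        show "\<forall>f\<in>M. {0, x} \<inter> f = {}" by (rule disjI2) (use no0 x in blast)
      qed (use x rn in auto)
      have "Suc (r-1) = r" using r2 by simp
      hence "2 \<le> (\<Sum>e\<in>insert {0,x} M. c e)" using bd M2 unfolding bad_def by metis
      moreover have "{0,x} \<notin> M" using no0 by blast
      moreover have "finite M" using MM unfolding nmatch_def by simp
      ultimately have "2 \<le> c {0,x} + (\<Sum>e\<in>M. c e)" by simp
      thus False using cx sumM lt by linarith
    qed
  qed
qed

lemma stable_main:
  "1 \<le> r \<Longrightarrow> 2*r < n \<Longrightarrow> stable n c \<Longrightarrow> bad n r c \<Longrightarrow> Lstab r n \<le> 2 * int (Wt n c)"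
proof (induction r arbitrary: n c rule: less_induct)
  case (less r)
  show ?case
  proof (cases "r = 1")
    case True thus ?thesis using base1 less.prems by simp
  next
    case False
    hence r2: "2 \<le> r" using less.prems by simp
    note st = less.prems(3) and bd = less.prems(4) and rn = less.prems(2)
    show ?thesis
    proof (cases "c {0, 2*r-1} = 0")
      case True
      note B = caseB[OF st bd r2 rn True]
      have "Lstab (r-1) (n-1) \<le> 2 * int (Wt (n-1) (\<lambda>e. c (Suc ` e)))"
        by (rule less.IH[OF _ _ _ B(1) B(2)]) (use r2 rn in auto)
      moreover have "Wt (n-1) (\<lambda>e. c (Suc ` e)) \<le> Wt n c"
        using Wt_shift[of "n-1" c] rn by simp
      moreover have "Lstab r n \<le> Lstab (r-1) (n-1)" by (rule Lstab_mono[OF r2 rn])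
      ultimately show ?thesis by linarith
    next
      case c1: False
      show ?thesis
      proof (cases "\<exists>s\<le>r-2. 1 \<le> c {s, 2*r-3-s}")
        case True
        then obtain s where "s \<le> r-2" "1 \<le> c {s, 2*r-3-s}" by blast
        thus ?thesis using caseA[OF st r2 rn] by blast
      next
        case False
        have hz: "\<forall>i<r-1. c {i, 2*r-3-i} = 0"
        proof (intro allI impI)
          fix i assume "i < r-1"
          hence "i \<le> r-2" by simp
          thus "c {i, 2*r-3-i} = 0" using False by (meson less_one not_le)
        qed
        show ?thesis by (rule caseC[OF st bd r2 rn hz]) (use c1 in simp)
      qed
    qed
  qed
qed



definition tr :: "nat \<Rightarrow> nat \<Rightarrow> nat \<Rightarrow> nat" where
  "tr i j x = (if x = i then j else if x = j then i else x)"

definition sh :: "nat \<Rightarrow> nat \<Rightarrow> (nat set \<Rightarrow> nat) \<Rightarrow> nat set \<Rightarrow> nat" where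
  "sh i j c e = (if i \<in> e \<and> j \<notin> e then min (c e) (c (tr i j ` e))
                 else if j \<in> e \<and> i \<notin> e then max (c e) (c (tr i j ` e)) else c e)"

definition Deg :: "nat \<Rightarrow> (nat set \<Rightarrow> nat) \<Rightarrow> nat \<Rightarrow> nat" where
  "Deg n c y = (\<Sum>x\<in>{..<n}-{y}. c {x,y})"

definition Tot :: "nat \<Rightarrow> (nat set \<Rightarrow> nat) \<Rightarrow> nat" where
  "Tot n c = (\<Sum>y<n. Deg n c y)"

definition Psi :: "nat \<Rightarrow> (nat set \<Rightarrow> nat) \<Rightarrow> nat" where
  "Psi n c = (\<Sum>y<n. y * Deg n c y)"

lemma tr_inj: "inj (tr i j)"
  unfolding tr_def inj_def by auto

lemma tr_img2: "tr i j ` {a,b} = {tr i j a, tr i j b}" by simp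

lemma tr_fix: "(i \<in> e \<longleftrightarrow> j \<in> e) \<Longrightarrow> tr i j ` e = e"
  unfolding tr_def by (auto simp: image_iff)

lemma sh_xi: "x \<noteq> i \<Longrightarrow> x \<noteq> j \<Longrightarrow> i \<noteq> j \<Longrightarrow> sh i j c {x,i} = min (c {x,i}) (c {x,j})"
  unfolding sh_def tr_def by auto

lemma sh_xj: "x \<noteq> i \<Longrightarrow> x \<noteq> j \<Longrightarrow> i \<noteq> j \<Longrightarrow> sh i j c {x,j} = max (c {x,j}) (c {x,i})"
  unfolding sh_def tr_def by auto

lemma sh_other: "(i \<in> e \<longleftrightarrow> j \<in> e) \<Longrightarrow> sh i j c e = c e"
  unfolding sh_def by auto

lemma tri_swap: "(\<Sum>y<(n::nat). \<Sum>x\<in>{y<..<n}. f x y) = (\<Sum>x<n. \<Sum>y<x. f x y)"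
proof (induction n)
  case 0 thus ?case by simp
next
  case (Suc n)
  have "(\<Sum>y<Suc n. \<Sum>x\<in>{y<..<Suc n}. f x y) = (\<Sum>y<Suc n. (\<Sum>x\<in>{y<..<n}. f x y) + (if y < n then f n y else 0))"
  proof (rule sum.cong[OF refl])
    fix y assume "y \<in> {..<Suc n}"
    show "(\<Sum>x\<in>{y<..<Suc n}. f x y) = (\<Sum>x\<in>{y<..<n}. f x y) + (if y < n then f n y else 0)"
    proof (cases "y < n")
      case True
      hence "{y<..<Suc n} = insert n {y<..<n}" by auto
      thus ?thesis using True by (simp add: add.commute)
    next
      case False
      hence "{y<..<Suc n} = {}" "{y<..<n} = {}" by auto
      thus ?thesis using False by simp
    qed
  qed
  also have "\<dots> = (\<Sum>y<Suc n. \<Sum>x\<in>{y<..<n}. f x y) + (\<Sum>y<Suc n. if y < n then f n y else 0)"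
    by (rule sum.distrib)
  also have "(\<Sum>y<Suc n. \<Sum>x\<in>{y<..<n}. f x y) = (\<Sum>y<n. \<Sum>x\<in>{y<..<n}. f x y)" by simp
  also have "(\<Sum>y<Suc n. if y < n then f n y else 0) = (\<Sum>y<n. f n y)" by simp
  finally show ?case using Suc by simp
qed

lemma Tot_Wt: "Tot n c = 2 * Wt n c"
proof -
  have split: "Deg n c y = (\<Sum>x<y. c {x,y}) + (\<Sum>x\<in>{y<..<n}. c {x,y})" if "y < n" for y
  proof -
    have "{..<n}-{y} = {..<y} \<union> {y<..<n}" "{..<y} \<inter> {y<..<n} = {}" using that by auto
    thus ?thesis unfolding Deg_def by (simp add: sum.union_disjoint)
  qed
  have "Tot n c = (\<Sum>y<n. \<Sum>x<y. c {x,y}) + (\<Sum>y<n. \<Sum>x\<in>{y<..<n}. c {x,y})"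
    unfolding Tot_def by (simp add: split sum.distrib)
  also have "(\<Sum>y<n. \<Sum>x\<in>{y<..<n}. c {x,y}) = (\<Sum>x<n. \<Sum>y<x. c {x,y})" by (rule tri_swap)
  also have "\<dots> = Wt n c" unfolding Wt_def by (simp add: insert_commute)
  finally show ?thesis unfolding Wt_def by simp
qed



lemma sum_two:
  assumes "finite A" "i \<in> A" "j \<in> A" "i \<noteq> j"
  shows "sum f A = f i + f j + sum f (A - {i,j})"
proof -
  have "sum f A = f i + sum f (A - {i})" using assms by (simp add: sum.remove)
  moreover have "sum f (A - {i}) = f j + sum f (A - {i} - {j})" using assms by (simp add: sum.remove)
  moreover have "A - {i} - {j} = A - {i,j}" by auto
  ultimately show ?thesis by (simp add: add.assoc)
qed

context
  fixes n i j :: nat and c :: "nat set \<Rightarrow> nat"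
  assumes ij: "i < j" "j < n"
begin

lemma Deg_sh_other:
  assumes y: "y < n" "y \<noteq> i" "y \<noteq> j"
  shows "Deg n (sh i j c) y = Deg n c y"
proof -
  let ?A = "{..<n}-{y}"
  have A: "finite ?A" "i \<in> ?A" "j \<in> ?A" "i \<noteq> j" using ij y by auto
  have e1: "sh i j c {i,y} = min (c {i,y}) (c {j,y})"
    using sh_xi[of y i j c] y ij by (simp add: insert_commute)
  have e2: "sh i j c {j,y} = max (c {j,y}) (c {i,y})"
    using sh_xj[of y i j c] y ij by (simp add: insert_commute)
  have e3: "(\<Sum>x\<in>?A-{i,j}. sh i j c {x,y}) = (\<Sum>x\<in>?A-{i,j}. c {x,y})"
    by (rule sum.cong[OF refl], rule sh_other) (use y in auto)
  show ?thesis unfolding Deg_def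
    using sum_two[OF A, of "\<lambda>x. sh i j c {x,y}"] sum_two[OF A, of "\<lambda>x. c {x,y}"] e1 e2 e3
    by (simp add: min_def max_def)
qed

lemma Deg_i_split:
  "Deg n d i = d {j,i} + (\<Sum>x\<in>{..<n}-{i,j}. d {x,i})"
proof -
  have "j \<in> {..<n}-{i}" using ij by auto
  hence "Deg n d i = d {j,i} + (\<Sum>x\<in>{..<n}-{i}-{j}. d {x,i})" unfolding Deg_def
    by (simp add: sum.remove)
  moreover have "{..<n}-{i}-{j} = {..<n}-{i,j}" by auto
  ultimately show ?thesis by simp
qed

lemma Deg_j_split:
  "Deg n d j = d {i,j} + (\<Sum>x\<in>{..<n}-{i,j}. d {x,j})"
proof -
  have "i \<in> {..<n}-{j}" using ij by auto
  hence "Deg n d j = d {i,j} + (\<Sum>x\<in>{..<n}-{j}-{i}. d {x,j})" unfolding Deg_def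
    by (simp add: sum.remove)
  moreover have "{..<n}-{j}-{i} = {..<n}-{i,j}" by auto
  ultimately show ?thesis by simp
qed

lemma sh_ij: "sh i j c {i,j} = c {i,j}" "sh i j c {j,i} = c {j,i}"
  by (auto intro: sh_other)

lemma Deg_sh_i:
  "Deg n (sh i j c) i = c {j,i} + (\<Sum>x\<in>{..<n}-{i,j}. min (c {x,i}) (c {x,j}))"
  unfolding Deg_i_split[of "sh i j c"] sh_ij
  by (rule arg_cong[where f="\<lambda>t. c {j,i} + t"], rule sum.cong[OF refl], rule sh_xi) (use ij in auto)

lemma Deg_sh_j:
  "Deg n (sh i j c) j = c {i,j} + (\<Sum>x\<in>{..<n}-{i,j}. max (c {x,j}) (c {x,i}))"
  unfolding Deg_j_split[of "sh i j c"] sh_ij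
  by (rule arg_cong[where f="\<lambda>t. c {i,j} + t"], rule sum.cong[OF refl], rule sh_xj) (use ij in auto)

lemma Deg_sh_sum: "Deg n (sh i j c) i + Deg n (sh i j c) j = Deg n c i + Deg n c j"
proof -
  have "(\<Sum>x\<in>{..<n}-{i,j}. min (c {x,i}) (c {x,j})) + (\<Sum>x\<in>{..<n}-{i,j}. max (c {x,j}) (c {x,i}))
      = (\<Sum>x\<in>{..<n}-{i,j}. c {x,i}) + (\<Sum>x\<in>{..<n}-{i,j}. c {x,j})"
    unfolding sum.distrib[symmetric] by (rule sum.cong) (auto simp: min_def max_def)
  thus ?thesis unfolding Deg_sh_i Deg_sh_j Deg_i_split[of c] Deg_j_split[of c] by simp
qed

lemma Deg_sh_le: "Deg n (sh i j c) i \<le> Deg n c i"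
  unfolding Deg_sh_i Deg_i_split[of c] by (simp add: sum_mono)

lemma Deg_sh_lt:
  assumes x: "x < n" "x \<noteq> i" "x \<noteq> j" "c {x,j} < c {x,i}"
  shows "Deg n (sh i j c) i < Deg n c i"
proof -
  have "(\<Sum>x\<in>{..<n}-{i,j}. min (c {x,i}) (c {x,j})) < (\<Sum>x\<in>{..<n}-{i,j}. c {x,i})"
  proof (rule sum_strict_mono_ex1)
    show "\<exists>a\<in>{..<n} - {i, j}. min (c {a, i}) (c {a, j}) < c {a, i}"
      by (rule bexI[of _ x]) (use x in auto)
  qed auto
  thus ?thesis unfolding Deg_sh_i Deg_i_split[of c] by simp
qed

lemma Tot_split: "Tot n d = Deg n d i + Deg n d j + (\<Sum>y\<in>{..<n}-{i,j}. Deg n d y)"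
  unfolding Tot_def by (rule sum_two) (use ij in auto)

lemma Psi_split: "Psi n d = i * Deg n d i + j * Deg n d j + (\<Sum>y\<in>{..<n}-{i,j}. y * Deg n d y)"
  unfolding Psi_def by (rule sum_two) (use ij in auto)

lemma rest_eq: "(\<Sum>y\<in>{..<n}-{i,j}. g (Deg n (sh i j c) y)) = (\<Sum>y\<in>{..<n}-{i,j}. g (Deg n c y))"
  for g :: "nat \<Rightarrow> nat"
  by (rule sum.cong[OF refl]) (simp add: Deg_sh_other)

lemma rest_eq2: "(\<Sum>y\<in>{..<n}-{i,j}. y * (Deg n (sh i j c) y)) = (\<Sum>y\<in>{..<n}-{i,j}. y * (Deg n c y))"
  by (rule sum.cong[OF refl]) (simp add: Deg_sh_other)

lemma Tot_sh: "Tot n (sh i j c) = Tot n c"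
  unfolding Tot_split using Deg_sh_sum rest_eq[of id] by simp

lemma Psi_sh:
  "Psi n c \<le> Psi n (sh i j c)"
  "(\<exists>x. x < n \<and> x \<noteq> i \<and> x \<noteq> j \<and> c {x,j} < c {x,i}) \<Longrightarrow> Psi n c < Psi n (sh i j c)"
proof -
  define a where "a = Deg n c i"
  define b where "b = Deg n c j"
  define a' where "a' = Deg n (sh i j c) i"
  define b' where "b' = Deg n (sh i j c) j"
  have s: "a' + b' = a + b" "a' \<le> a" unfolding a_def b_def a'_def b'_def
    using Deg_sh_sum Deg_sh_le by auto
  have key: "i * a + j * b + (j - i) * (a - a') = i * a' + j * b'"
  proof -
    have "b' = b + (a - a')" using s by simp
    hence "j * b' = j * b + j * (a - a')" by (simp add: algebra_simps)
    moreover have "i * a = i * a' + i * (a - a')" using s by (simp add: algebra_simps)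
    moreover have "j * (a - a') = i * (a - a') + (j - i) * (a - a')"
    proof -
      have "j = (j - i) + i" using ij by simp
      hence "j * (a - a') = ((j - i) + i) * (a - a')" by simp
      thus ?thesis by (simp add: add_mult_distrib)
    qed
    ultimately show ?thesis by simp
  qed
  have P: "Psi n (sh i j c) = Psi n c + (j - i) * (a - a')"
    unfolding Psi_split[of c] Psi_split[of "sh i j c"] rest_eq2
    using key unfolding a_def b_def a'_def b'_def by simp
  show "Psi n c \<le> Psi n (sh i j c)" unfolding P by simp
  assume "\<exists>x. x < n \<and> x \<noteq> i \<and> x \<noteq> j \<and> c {x,j} < c {x,i}"
  then obtain x where "x < n" "x \<noteq> i" "x \<noteq> j" "c {x,j} < c {x,i}" by blast
  hence "a' < a" unfolding a_def a'_def by (rule Deg_sh_lt)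
  thus "Psi n c < Psi n (sh i j c)" unfolding P using ij by simp
qed

end



lemma sum_le1:
  fixes g h :: "'a \<Rightarrow> nat"
  assumes "finite S" "\<forall>e\<in>S. \<forall>f\<in>S. e = f"
  shows "(\<Sum>e\<in>S. min (g e) (h e)) = min (sum g S) (sum h S)"
        "(\<Sum>e\<in>S. max (g e) (h e)) = max (sum g S) (sum h S)"
proof -
  have "S = {} \<or> (\<exists>e. S = {e})" using assms by blast
  thus "(\<Sum>e\<in>S. min (g e) (h e)) = min (sum g S) (sum h S)"
       "(\<Sum>e\<in>S. max (g e) (h e)) = max (sum g S) (sum h S)" by auto
qed

lemma tr_lt: "i < n \<Longrightarrow> j < n \<Longrightarrow> a < n \<Longrightarrow> tr i j a < n"
  unfolding tr_def by auto

lemma bad_sh: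
  assumes ij: "i < j" "j < n" and bd: "bad n r c"
  shows "bad n r (sh i j c)"
  unfolding bad_def
proof (intro allI impI)
  fix M' assume M': "nmatch n r M'"
  define \<tau> where "\<tau> = (\<lambda>e. tr i j ` e)"
  have inj\<tau>: "inj_on \<tau> M'" unfolding \<tau>_def using tr_inj
    by (meson inj_image_eq_iff inj_onI)
  have fin: "finite M'" using M' unfolding nmatch_def by simp
  have M2: "nmatch n r (\<tau> ` M')"
    unfolding nmatch_def
  proof (intro conjI)
    show "finite (\<tau> ` M')" using fin by simp
    show "\<tau> ` M' \<subseteq> pairs n"
    proof
      fix e assume "e \<in> \<tau> ` M'"
      then obtain e' where "e' \<in> M'" "e = \<tau> e'" by blast
      moreover then obtain a b where "e' = {a,b}" "a < n" "b < n" "a \<noteq> b"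
        using M' unfolding nmatch_def pairs_def by blast
      ultimately have "e = {tr i j a, tr i j b}" "tr i j a \<noteq> tr i j b"
        unfolding \<tau>_def using tr_inj by (auto simp: inj_eq)
      thus "e \<in> pairs n" using tr_lt ij \<open>a<n\<close> \<open>b<n\<close> by (auto intro!: pairsI)
    qed
    show "\<forall>e\<in>\<tau> ` M'. \<forall>f\<in>\<tau> ` M'. e \<noteq> f \<longrightarrow> e \<inter> f = {}"
    proof (intro ballI impI)
      fix e f assume "e \<in> \<tau> ` M'" "f \<in> \<tau> ` M'" "e \<noteq> f"
      then obtain e' f' where ef: "e' \<in> M'" "f' \<in> M'" "e = \<tau> e'" "f = \<tau> f'" by blast
      hence "e' \<noteq> f'" using \<open>e \<noteq> f\<close> by blast
      hence "e' \<inter> f' = {}" using nmatch_disj[OF M'] ef by blast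
      thus "e \<inter> f = {}" using ef tr_inj unfolding \<tau>_def by (auto simp: image_Int[symmetric])
    qed
    show "card (\<tau> ` M') = r" using card_image[OF inj\<tau>] M' unfolding nmatch_def by simp
  qed
  have s1: "2 \<le> (\<Sum>e\<in>M'. c e)" using bd M' unfolding bad_def by blast
  have "2 \<le> (\<Sum>e\<in>\<tau> ` M'. c e)" using bd M2 unfolding bad_def by blast
  hence s2: "2 \<le> (\<Sum>e\<in>M'. c (\<tau> e))" by (simp add: sum.reindex[OF inj\<tau>])
  define Ti where "Ti = {e\<in>M'. i \<in> e \<and> j \<notin> e}"
  define Tj where "Tj = {e\<in>M'. j \<in> e \<and> i \<notin> e}"
  define Oth where "Oth = M' - Ti - Tj"
  have split: "sum g M' = sum g Ti + sum g Tj + sum g Oth" for g :: "nat set \<Rightarrow> nat"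
  proof -
    have "Ti \<subseteq> M'" unfolding Ti_def by auto
    hence "sum g M' = sum g (M' - Ti) + sum g Ti" using fin by (rule sum.subset_diff)
    hence "sum g M' = sum g Ti + sum g (M' - Ti)" by simp
    moreover have "sum g (M' - Ti) = sum g Tj + sum g (M' - Ti - Tj)"
    proof -
      have "Tj \<subseteq> M' - Ti" unfolding Ti_def Tj_def by auto
      hence "sum g (M' - Ti) = sum g (M' - Ti - Tj) + sum g Tj" using fin by (intro sum.subset_diff) auto
      thus ?thesis by simp
    qed
    ultimately show ?thesis unfolding Oth_def by simp
  qed
  have one_i: "\<forall>e\<in>Ti. \<forall>f\<in>Ti. e = f"
  proof (intro ballI)
    fix e f assume "e \<in> Ti" "f \<in> Ti"
    thus "e = f" using nmatch_disj[OF M', of e f] unfolding Ti_def by blast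
  qed
  have one_j: "\<forall>e\<in>Tj. \<forall>f\<in>Tj. e = f"
  proof (intro ballI)
    fix e f assume "e \<in> Tj" "f \<in> Tj"
    thus "e = f" using nmatch_disj[OF M', of e f] unfolding Tj_def by blast
  qed
  have finT: "finite Ti" "finite Tj" using fin unfolding Ti_def Tj_def by auto
  have shTi: "(\<Sum>e\<in>Ti. sh i j c e) = min (\<Sum>e\<in>Ti. c e) (\<Sum>e\<in>Ti. c (\<tau> e))"
  proof -
    have "(\<Sum>e\<in>Ti. sh i j c e) = (\<Sum>e\<in>Ti. min (c e) (c (\<tau> e)))"
      by (rule sum.cong) (auto simp: sh_def Ti_def \<tau>_def)
    thus ?thesis using sum_le1(1)[OF finT(1) one_i] by simp
  qed
  have shTj: "(\<Sum>e\<in>Tj. sh i j c e) = max (\<Sum>e\<in>Tj. c e) (\<Sum>e\<in>Tj. c (\<tau> e))"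
  proof -
    have "(\<Sum>e\<in>Tj. sh i j c e) = (\<Sum>e\<in>Tj. max (c e) (c (\<tau> e)))"
      by (rule sum.cong) (auto simp: sh_def Tj_def \<tau>_def)
    thus ?thesis using sum_le1(2)[OF finT(2) one_j] by simp
  qed
  have shO: "(\<Sum>e\<in>Oth. sh i j c e) = (\<Sum>e\<in>Oth. c e)" "(\<Sum>e\<in>Oth. c (\<tau> e)) = (\<Sum>e\<in>Oth. c e)"
  proof -
    have fx: "\<And>e. e \<in> Oth \<Longrightarrow> (i \<in> e \<longleftrightarrow> j \<in> e)" unfolding Oth_def Ti_def Tj_def by auto
    show "(\<Sum>e\<in>Oth. sh i j c e) = (\<Sum>e\<in>Oth. c e)" by (rule sum.cong[OF refl]) (use fx sh_other in blast)
    show "(\<Sum>e\<in>Oth. c (\<tau> e)) = (\<Sum>e\<in>Oth. c e)" by (rule sum.cong[OF refl]) (use fx tr_fix in \<open>auto simp: \<tau>_def\<close>)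
  qed
  have A: "(\<Sum>e\<in>M'. sh i j c e) = min (\<Sum>e\<in>Ti. c e) (\<Sum>e\<in>Ti. c (\<tau> e)) + max (\<Sum>e\<in>Tj. c e) (\<Sum>e\<in>Tj. c (\<tau> e)) + (\<Sum>e\<in>Oth. c e)"
    using split[of "sh i j c"] shTi shTj shO by simp
  have B: "(\<Sum>e\<in>M'. c e) = (\<Sum>e\<in>Ti. c e) + (\<Sum>e\<in>Tj. c e) + (\<Sum>e\<in>Oth. c e)" by (rule split)
  have C: "(\<Sum>e\<in>M'. c (\<tau> e)) = (\<Sum>e\<in>Ti. c (\<tau> e)) + (\<Sum>e\<in>Tj. c (\<tau> e)) + (\<Sum>e\<in>Oth. c e)"
    using split[of "\<lambda>e. c (\<tau> e)"] shO by simp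
  have mm: "2 \<le> min a a' + max b b' + oo" if "2 \<le> a + b + oo" "2 \<le> a' + b' + oo" for a a' b b' oo :: nat
  proof (cases "a \<le> a'")
    case True thus ?thesis using that by (simp add: min_def max_def)
  next
    case False thus ?thesis using that by (simp add: min_def max_def)
  qed
  show "2 \<le> (\<Sum>e\<in>M'. sh i j c e)" unfolding A by (rule mm) (use B C s1 s2 in simp_all)
qed

lemma Psi_le: "Psi n c \<le> n * Tot n c"
  unfolding Psi_def Tot_def sum_distrib_left by (rule sum_mono) simp

lemma stabilize:
  assumes "bad n r c0"
  shows "\<exists>c. stable n c \<and> bad n r c \<and> Tot n c = Tot n c0"
proof -
  define P where "P c \<longleftrightarrow> bad n r c \<and> Tot n c = Tot n c0" for c
  have "P c0" using assms P_def by simp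
  moreover have "\<forall>c. P c \<longrightarrow> Psi n c < n * Tot n c0 + 1"
    using Psi_le unfolding P_def by (metis less_Suc_eq_le Suc_eq_plus1)
  ultimately obtain c where c: "P c" and mx: "\<forall>d. P d \<longrightarrow> Psi n d \<le> Psi n c"
    using Lattices_Big.ex_has_greatest_nat[of P c0 "Psi n"] by blast
  have "stable n c"
    unfolding stable_def
  proof (rule ccontr)
    assume "\<not> (\<forall>x i j. x < n \<longrightarrow> j < n \<longrightarrow> i < j \<longrightarrow> x \<noteq> i \<longrightarrow> x \<noteq> j \<longrightarrow> c {x, i} \<le> c {x, j})"
    then obtain x i j where h: "x < n" "j < n" "i < j" "x \<noteq> i" "x \<noteq> j" "c {x,j} < c {x,i}"
      by (meson not_le)
    have "P (sh i j c)" using c bad_sh[OF h(3) h(2)] Tot_sh[OF h(3) h(2)] unfolding P_def by simp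
    moreover have "Psi n c < Psi n (sh i j c)" by (rule Psi_sh(2)[OF h(3) h(2)]) (use h in blast)
    ultimately show False using mx by (meson not_le)
  qed
  thus ?thesis using c P_def by blast
qed



lemma final_arith:
  assumes r1: "1 \<le> r" and rk: "r < k"
    and H: "(real k \<le> (3 * real r - 7) / 2 \<and>
          real W < min ((real k + 3 * real r - 4) * (real k - real r + 3) / 2)
                ((real k - real r + 2) * (real k + real r - 1)))
       \<or> (real k > (3 * real r - 7) / 2 \<and>
          real W < min ((real k + 1) * (real k + 2) / 2)
                ((real k - real r + 2) * (real k + real r - 1)))"
  shows "2 * int W < Lstab r (r + k)"
proof -
  define K where "K = int k"
  define R where "R = int r"
  have hP3: "real W < (real k - real r + 2) * (real k + real r - 1)" using H by auto
  have i3: "2 * int W < 2*(K-R+2)*(K+R-1)"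
  proof -
    have e: "real_of_int (2*(K-R+2)*(K+R-1)) = 2 * ((real k - real r + 2) * (real k + real r - 1))"
      unfolding K_def R_def by (simp add: algebra_simps)
    have "real_of_int (2 * int W) < real_of_int (2*(K-R+2)*(K+R-1))"
      unfolding e using hP3 by simp
    thus ?thesis by (simp only: of_int_less_iff)
  qed
  show ?thesis
  proof (cases "r = 1")
    case True
    have "\<not> real k \<le> (3 * real r - 7) / 2" using True by simp
    have "Lstab r (r+k) = 2*(K+1)*K" unfolding Lstab_def K_def using True by (simp add: algebra_simps)
    moreover have "2*(K-R+2)*(K+R-1) = 2*(K+1)*K" using True R_def by (simp add: algebra_simps)
    ultimately show ?thesis using i3 by simp
  next
    case False
    hence r2: "R \<ge> 2" using r1 R_def by simp
    have L: "Lstab r (r+k) = min ((K + 3*R - 4) * (K - R + 3)) (min ((K+1)*(K+2)) (2*(K - R + 2)*(K + R - 1)))"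
      using False unfolding Lstab_def Let_def K_def R_def by simp
    show ?thesis
    proof (cases "real k \<le> (3 * real r - 7) / 2")
      case True
      have hP1: "real W < (real k + 3 * real r - 4) * (real k - real r + 3) / 2" using H True by auto
      have i1: "2 * int W < (K + 3*R - 4) * (K - R + 3)"
      proof -
        have "real_of_int (2 * int W) < real_of_int ((K + 3*R - 4) * (K - R + 3))"
          using hP1 unfolding K_def R_def by simp
        thus ?thesis by (simp only: of_int_less_iff)
      qed
      have kk: "2*K \<le> 3*R - 7"
      proof -
        have "real_of_int (2*K) \<le> real_of_int (3*R - 7)" using True unfolding K_def R_def by simp
        thus ?thesis by (simp only: of_int_le_iff)
      qed
      have "(K+1)*(K+2) - (K + 3*R - 4) * (K - R + 3) = (R-2)*(3*R - 7 - 2*K)" by (simp add: algebra_simps)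
      moreover have "0 \<le> (R-2)*(3*R - 7 - 2*K)" using kk r2 by simp
      ultimately have "(K + 3*R - 4) * (K - R + 3) \<le> (K+1)*(K+2)" by (rule le_by_diff)
      thus ?thesis using L i1 i3 by simp
    next
      case False
      have hP2: "real W < (real k + 1) * (real k + 2) / 2" using H False by auto
      have i2: "2 * int W < (K+1)*(K+2)"
      proof -
        have "real_of_int (2 * int W) < real_of_int ((K+1)*(K+2))"
          using hP2 unfolding K_def R_def by simp
        thus ?thesis by (simp only: of_int_less_iff)
      qed
      have kk: "2*K > 3*R - 7"
      proof -
        have "real_of_int (2*K) > real_of_int (3*R - 7)" using False unfolding K_def R_def by simp
        thus ?thesis by (simp only: of_int_less_iff)
      qed
      have "(K + 3*R - 4) * (K - R + 3) - (K+1)*(K+2) = (R-2)*(2*K - 3*R + 7)" by (simp add: algebra_simps)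
      moreover have "0 \<le> (R-2)*(2*K - 3*R + 7)" using kk r2 by simp
      ultimately have "(K+1)*(K+2) \<le> (K + 3*R - 4) * (K - R + 3)" by (rule le_by_diff)
      thus ?thesis using L i2 i3 by simp
    qed
  qed
qed



lemma sum_indicator_card:
  assumes "finite A" "B \<subseteq> A"
  shows "(\<Sum>e\<in>A. if e \<in> B then (1::nat) else 0) = card B"
proof -
  have "(\<Sum>e\<in>A. if e \<in> B then (1::nat) else 0) = (\<Sum>e\<in>{x\<in>A. x \<in> B}. 1)"
    using sum.inter_filter[OF assms(1), of "\<lambda>_. (1::nat)" "\<lambda>x. x \<in> B"] by simp
  also have "{x\<in>A. x \<in> B} = B" using assms by auto
  finally show ?thesis by simp
qed

lemma Wt_bridge:
  assumes bij: "bij_betw f {0..<n} V"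
    and part: "ordered_partition3 (complete_edges V) E0 E1 E2"
    and fin: "finite V"
  defines "g \<equiv> (\<lambda>e. if e \<in> E1 then (1::nat) else if e \<in> E2 then 2 else 0)"
  shows "Wt n (\<lambda>e. g (f ` e)) = card E1 + 2 * card E2"
proof -
  have inj: "inj_on f {0..<n}" using bij by (rule bij_betw_imp_inj_on)
  have img: "f ` {0..<n} = V" using bij by (rule bij_betw_imp_surj_on)
  have finCE: "finite (complete_edges V)"
  proof -
    have "complete_edges V \<subseteq> Pow V" unfolding complete_edges_def by auto
    moreover have "finite (Pow V)" using fin by simp
    ultimately show ?thesis by (rule finite_subset)
  qed
  have E12: "E1 \<subseteq> complete_edges V" "E2 \<subseteq> complete_edges V" "E1 \<inter> E2 = {}"
    using part unfolding ordered_partition3_def by auto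
  define S where "S = (SIGMA b:{..<n}. {..<b})"
  define h where "h = (\<lambda>(b,a). {f a, f b})"
  have bh: "bij_betw h S (complete_edges V)"
    unfolding bij_betw_def
  proof
    show "inj_on h S"
    proof (rule inj_onI)
      fix x y assume "x \<in> S" "y \<in> S" "h x = h y"
      then obtain b a b' a' where xy: "x = (b,a)" "y = (b',a')" "a < b" "b < n" "a' < b'" "b' < n"
        "{f a, f b} = {f a', f b'}" unfolding S_def h_def by auto
      have "f a \<noteq> f b"
      proof
        assume "f a = f b"
        hence "a = b" using inj_onD[OF inj] xy by simp
        thus False using xy by simp
      qed
      from xy(7) have "(f a = f a' \<and> f b = f b') \<or> (f a = f b' \<and> f b = f a')" by (auto simp: doubleton_eq_iff)
      thus "x = y"
      proof
        assume "f a = f a' \<and> f b = f b'"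
        hence "a = a'" "b = b'" using inj xy by (auto dest: inj_onD)
        thus ?thesis using xy by simp
      next
        assume "f a = f b' \<and> f b = f a'"
        hence "a = b'" "b = a'" using inj xy by (auto dest: inj_onD)
        thus ?thesis using xy by simp
      qed
    qed
    show "h ` S = complete_edges V"
    proof
      show "h ` S \<subseteq> complete_edges V"
      proof
        fix e assume "e \<in> h ` S"
        then obtain b a where ba: "a < b" "b < n" "e = {f a, f b}" unfolding S_def h_def by auto
        have "f a \<noteq> f b"
        proof
          assume "f a = f b"
          hence "a = b" using inj_onD[OF inj] ba by simp
          thus False using ba by simp
        qed
        moreover have "f a \<in> V" "f b \<in> V" using img ba by auto
        ultimately show "e \<in> complete_edges V" unfolding complete_edges_def using ba by auto
      qed
      show "complete_edges V \<subseteq> h ` S"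
      proof
        fix e assume "e \<in> complete_edges V"
        hence "e \<subseteq> V" "card e = 2" unfolding complete_edges_def by auto
        then obtain u v where uv: "e = {u,v}" "u \<noteq> v" by (meson card_2_iff)
        hence "u \<in> V" "v \<in> V" using \<open>e \<subseteq> V\<close> by auto
        then obtain a b where ab: "a < n" "b < n" "f a = u" "f b = v" using img by force
        have "a \<noteq> b" using ab uv by auto
        show "e \<in> h ` S"
        proof (cases "a < b")
          case True
          hence "(b,a) \<in> S" using ab unfolding S_def by auto
          moreover have "h (b,a) = e" unfolding h_def using ab uv by auto
          ultimately show ?thesis by force
        next
          case False
          hence "(a,b) \<in> S" using ab \<open>a \<noteq> b\<close> unfolding S_def by auto
          moreover have "h (a,b) = e" unfolding h_def using ab uv by auto
          ultimately show ?thesis by force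
        qed
      qed
    qed
  qed
  have "Wt n (\<lambda>e. g (f ` e)) = (\<Sum>(b,a)\<in>S. g (h (b,a)))"
    unfolding Wt_def S_def h_def by (simp add: sum.Sigma)
  also have "\<dots> = (\<Sum>x\<in>S. g (h x))" by (simp add: case_prod_beta')
  also have "\<dots> = (\<Sum>e\<in>complete_edges V. g e)" by (rule sum.reindex_bij_betw[OF bh])
  also have "\<dots> = (\<Sum>e\<in>complete_edges V. (if e \<in> E1 then 1 else 0) + 2 * (if e \<in> E2 then 1 else 0))"
    by (rule sum.cong) (use E12 in \<open>auto simp: g_def\<close>)
  also have "\<dots> = card E1 + 2 * card E2"
    by (simp add: sum.distrib sum_distrib_left[symmetric] sum_indicator_card[OF finCE E12(1)] sum_indicator_card[OF finCE E12(2)])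
  finally show ?thesis .
qed



lemma good_from:
  assumes bij: "bij_betw f {0..<n} V"
    and part: "ordered_partition3 (complete_edges V) E0 E1 E2"
    and M': "nmatch n r M'"
  defines "g \<equiv> (\<lambda>e. if e \<in> E1 then (1::nat) else if e \<in> E2 then 2 else 0)"
  assumes le1: "(\<Sum>e\<in>M'. g (f ` e)) \<le> 1"
  shows "good_matching (complete_edges V) E1 E2 ((\<lambda>e. f ` e) ` M') \<and> card ((\<lambda>e. f ` e) ` M') = r"
proof -
  have inj: "inj_on f {0..<n}" using bij by (rule bij_betw_imp_inj_on)
  have img: "f ` {0..<n} = V" using bij by (rule bij_betw_imp_surj_on)
  have E12: "E1 \<inter> E2 = {}" using part unfolding ordered_partition3_def by auto
  have fin: "finite M'" using M' unfolding nmatch_def by simp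
  have sub: "M' \<subseteq> Pow {0..<n}" using M' unfolding nmatch_def pairs_def by auto
  have injM: "inj_on (\<lambda>e. f ` e) M'" using inj_on_image_Pow[OF inj] sub by (rule inj_on_subset)
  define M where "M = (\<lambda>e. f ` e) ` M'"
  have "M \<subseteq> complete_edges V"
  proof
    fix e assume "e \<in> M"
    then obtain e' where "e' \<in> M'" "e = f ` e'" unfolding M_def by blast
    moreover then obtain a b where ab: "e' = {a,b}" "a < n" "b < n" "a \<noteq> b"
      using M' unfolding nmatch_def pairs_def by blast
    ultimately have "e = {f a, f b}" by simp
    moreover have "f a \<noteq> f b"
    proof
      assume "f a = f b"
      hence "a = b" using inj_onD[OF inj] ab by simp
      thus False using ab by simp
    qed
    moreover have "f a \<in> V" "f b \<in> V" using img ab by auto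
    ultimately show "e \<in> complete_edges V" unfolding complete_edges_def by auto
  qed
  moreover have "matching M"
    unfolding matching_def
  proof (intro ballI impI)
    fix e e2 assume "e \<in> M" "e2 \<in> M" "e \<noteq> e2"
    then obtain x y where xy: "x \<in> M'" "y \<in> M'" "e = f ` x" "e2 = f ` y" unfolding M_def by blast
    hence "x \<noteq> y" using \<open>e \<noteq> e2\<close> by blast
    hence "x \<inter> y = {}" using nmatch_disj[OF M'] xy by blast
    moreover have "f ` (x \<inter> y) = f ` x \<inter> f ` y" by (rule inj_on_image_Int[OF inj]) (use sub xy in auto)
    ultimately show "e \<inter> e2 = {}" using xy by simp
  qed
  moreover have "M \<inter> E2 = {}"
  proof (rule ccontr)
    assume "M \<inter> E2 \<noteq> {}"
    then obtain x where x: "x \<in> M'" "f ` x \<in> E2" unfolding M_def by blast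
    hence "g (f ` x) = 2" using E12 unfolding g_def by auto
    moreover have "g (f ` x) \<le> (\<Sum>e\<in>M'. g (f ` e))" by (rule member_le_sum) (use x fin in auto)
    ultimately show False using le1 by simp
  qed
  moreover have "card (M \<inter> E1) \<le> 1"
  proof -
    define A where "A = {x \<in> M'. f ` x \<in> E1}"
    have "M \<inter> E1 = (\<lambda>e. f ` e) ` A" unfolding M_def A_def by auto
    hence "card (M \<inter> E1) \<le> card A" by (simp add: card_image_le fin A_def)
    also have "card A = (\<Sum>e\<in>A. g (f ` e))" unfolding A_def g_def by simp
    also have "\<dots> \<le> (\<Sum>e\<in>M'. g (f ` e))" by (rule sum_mono2) (use fin A_def in auto)
    finally show ?thesis using le1 by simp
  qed
  ultimately have "good_matching (complete_edges V) E1 E2 M" unfolding good_matching_def by blast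
  moreover have "card M = r" using card_image[OF injM] M' unfolding M_def nmatch_def by simp
  ultimately show ?thesis unfolding M_def by blast
qed

theorem lemma16:
  fixes V :: "'a set" and r k :: nat and E0 E1 E2 :: "'a set set"
  assumes "finite V" and "card V = r + k"
    and "0 < r" and "r < k"
    and "ordered_partition3 (complete_edges V) E0 E1 E2"
  shows "(real k \<le> (3 * real r - 7) / 2 \<and>
          real (card E1 + 2 * card E2) <
            min ((real k + 3 * real r - 4) * (real k - real r + 3) / 2)
                ((real k - real r + 2) * (real k + real r - 1))
          \<longrightarrow> (\<exists>M. good_matching (complete_edges V) E1 E2 M \<and> card M = r))
       \<and> (real k > (3 * real r - 7) / 2 \<and>
          real (card E1 + 2 * card E2) <
            min ((real k + 1) * (real k + 2) / 2)
                ((real k - real r + 2) * (real k + real r - 1))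
          \<longrightarrow> (\<exists>M. good_matching (complete_edges V) E1 E2 M \<and> card M = r))"
proof -
  define n where "n = r + k"
  obtain f where bij: "bij_betw f {0..<n} V"
    using ex_bij_betw_nat_finite[OF assms(1)] assms(2) n_def by metis
  define g where "g = (\<lambda>e. if e \<in> E1 then (1::nat) else if e \<in> E2 then 2 else 0)"
  define c0 where "c0 = (\<lambda>e. g (f ` e))"
  define W where "W = card E1 + 2 * card E2"
  have key: "\<exists>M. good_matching (complete_edges V) E1 E2 M \<and> card M = r"
    if H: "(real k \<le> (3 * real r - 7) / 2 \<and>
          real W < min ((real k + 3 * real r - 4) * (real k - real r + 3) / 2)
                ((real k - real r + 2) * (real k + real r - 1)))
       \<or> (real k > (3 * real r - 7) / 2 \<and>
          real W < min ((real k + 1) * (real k + 2) / 2)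
                ((real k - real r + 2) * (real k + real r - 1)))"
  proof (rule ccontr)
    assume no: "\<not> (\<exists>M. good_matching (complete_edges V) E1 E2 M \<and> card M = r)"
    have bd: "bad n r c0"
      unfolding bad_def
    proof (intro allI impI)
      fix M' assume M': "nmatch n r M'"
      show "2 \<le> (\<Sum>e\<in>M'. c0 e)"
      proof (rule ccontr)
        assume "\<not> 2 \<le> (\<Sum>e\<in>M'. c0 e)"
        hence h: "(\<Sum>e\<in>M'. (\<lambda>e. if e \<in> E1 then (1::nat) else if e \<in> E2 then 2 else 0) (f ` e)) \<le> 1"
          unfolding c0_def g_def by simp
        from good_from[OF bij assms(5) M' h] no show False by blast
      qed
    qed
    obtain c where c: "stable n c" "bad n r c" "Tot n c = Tot n c0" using stabilize[OF bd] by blast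
    have "Wt n c = Wt n c0" using c(3) Tot_Wt by simp
    also have "Wt n c0 = W" unfolding c0_def g_def W_def by (rule Wt_bridge[OF bij assms(5) assms(1)])
    finally have Wc: "Wt n c = W" .
    have "Lstab r n \<le> 2 * int (Wt n c)" by (rule stable_main[OF _ _ c(1) c(2)]) (use assms n_def in auto)
    moreover have "2 * int W < Lstab r (r + k)" by (rule final_arith[OF _ assms(4) H]) (use assms in auto)
    ultimately show False using Wc n_def by simp
  qed
  show ?thesis using key unfolding W_def by blast
qed

end
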